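(* There is a constant $C_5>0$ depending only on $d,s,\alpha,\Lambda$ such that for every $\Lambda$-nice measure $\mu$ on $\mathbb{R}^d$ and every $A>10\sqrt d$, the family $\Psi^\mu_{Q,A}$ $(Q\in\mathcal{D})$ is a $C_5A^{d+2+\frac{3s}{2}}$-Riesz family.
   Context: $d\ge2$, $s\in(0,d)$. A measure $\mu$ (nonnegative locally finite Borel) is $\Lambda$-nice if $\mu(B(x,r))\le\Lambda r^s$ for all balls. $\mathcal{D}$ is the lattice of half-open dyadic cubes in $\mathbb{R}^d$; $\ell(Q)$ is the side length and $x_Q$ the centre of $Q$. For $A>10\sqrt d$, $\Psi^\mu_{Q,A}$ is the set of Lipschitz functions $\psi$ compactly supported in $B(x_Q,A\ell(Q))$ with $\int\psi\,d\mu=0$ and Lipschitz constant $<\ell(Q)^{-1-s/2}$. A sequence $(\psi_Q)_{Q\in\mathcal{D}}$ is a $C$-Riesz system (in $L^2(\mu)$) if $\|\sum_Q a_Q\psi_Q\|_{L^2(\mu)}^2\le C\sum_Q|a_Q|^2$ for every $(a_Q)\in\ell^2(\mathcal{D})$. A family of sets $(\Psi_Q)_{Q\in\mathcal D}$ is a $C$-Riesz family if every choice $\psi_Q\in\Psi_Q$ gives a $C$-Riesz system. *)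

theory Defs
  imports "HOL-Analysis.Analysis" "HOL-Probability.Probability"
begin

text \<open>Dyadic cubes in R^d (d = CARD('n)), indexed by generation k and integer
  translation vector j: Q(k,j) = prod_i [j_i 2^-k, (j_i+1) 2^-k).  The map
  (k,j) to Q(k,j) is a bijection onto the dyadic lattice D.\<close>

type_synonym 'n dyadic_index = "int \<times> ('n \<Rightarrow> int)"

definition dyadic_cube :: "'n::finite dyadic_index \<Rightarrow> (real^'n) set" where
  "dyadic_cube Q = {x. \<forall>i. real_of_int (snd Q i) * 2 powr (- real_of_int (fst Q)) \<le> x$i
                          \<and> x$i < (real_of_int (snd Q i) + 1) * 2 powr (- real_of_int (fst Q))}"

definition dyadic_cubes :: "(real^'n::finite) set set" where
  "dyadic_cubes = range dyadic_cube"

definition side_len :: "'n::finite dyadic_index \<Rightarrow> real" where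
  "side_len Q = 2 powr (- real_of_int (fst Q))"

definition centre :: "'n::finite dyadic_index \<Rightarrow> real^'n" where
  "centre Q = (\<chi> i. (real_of_int (snd Q i) + 1/2) * side_len Q)"

definition nice_measure :: "real \<Rightarrow> real \<Rightarrow> (real^'n::finite) measure \<Rightarrow> bool" where
  "nice_measure s \<Lambda> \<mu> \<longleftrightarrow>
     sets \<mu> = sets borel
     \<and> (\<forall>x. \<exists>r>0. emeasure \<mu> (ball x r) < \<infinity>)
     \<and> (\<forall>x r. r > 0 \<longrightarrow> emeasure \<mu> (ball x r) \<le> ennreal (\<Lambda> * r powr s))"

definition Psi :: "real \<Rightarrow> (real^'n::finite) measure \<Rightarrow> real \<Rightarrow> 'n dyadic_index
                     \<Rightarrow> (real^'n \<Rightarrow> real) set" where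
  "Psi s \<mu> A Q = {\<psi>.
      (\<exists>L. L < side_len Q powr (-1 - s/2) \<and> L-lipschitz_on UNIV \<psi>)
    \<and> (\<exists>K. compact K \<and> K \<subseteq> ball (centre Q) (A * side_len Q) \<and> (\<forall>x. x \<notin> K \<longrightarrow> \<psi> x = 0))
    \<and> integral\<^sup>L \<mu> \<psi> = 0}"

text \<open>C-Riesz system: for every square-summable (a_Q), the norm in L^2(mu) of
  the sum is bounded by C sum |a_Q|^2; the sum is understood as the L^2 limit of
  its finite partial sums, so we require the bound for every finite partial sum.\<close>

definition riesz_system :: "real \<Rightarrow> (real^'n::finite) measure
                              \<Rightarrow> ('n dyadic_index \<Rightarrow> real^'n \<Rightarrow> real) \<Rightarrow> bool" where
  "riesz_system C \<mu> \<psi> \<longleftrightarrow>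
     (\<forall>a :: 'n dyadic_index \<Rightarrow> real. (\<lambda>Q. (a Q)\<^sup>2) summable_on UNIV \<longrightarrow>
        (\<forall>F. finite F \<longrightarrow>
           (\<integral>\<^sup>+ x. ennreal ((\<Sum>Q\<in>F. a Q * \<psi> Q x)\<^sup>2) \<partial>\<mu>)
             \<le> ennreal (C * (\<Sum>\<^sub>\<infinity>Q. (a Q)\<^sup>2))))"

definition riesz_family :: "real \<Rightarrow> (real^'n::finite) measure
                              \<Rightarrow> ('n dyadic_index \<Rightarrow> (real^'n \<Rightarrow> real) set) \<Rightarrow> bool" where
  "riesz_family C \<mu> \<Psi> \<longleftrightarrow> (\<forall>\<psi>. (\<forall>Q. \<psi> Q \<in> \<Psi> Q) \<longrightarrow> riesz_system C \<mu> \<psi>)"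

end

theory Submission
  imports Defs
begin


lemma card_int_interval_le:
  fixes a b :: real
  assumes "a \<le> b"
  shows "real (card {\<lceil>a\<rceil>..\<lfloor>b\<rfloor>}) \<le> b - a + 1"
proof -
  have "real (card {\<lceil>a\<rceil>..\<lfloor>b\<rfloor>}) = real (nat (\<lfloor>b\<rfloor> - \<lceil>a\<rceil> + 1))" by simp
  also have "\<dots> \<le> b - a + 1"
  proof (cases "\<lfloor>b\<rfloor> - \<lceil>a\<rceil> + 1 \<ge> 0")
    case True
    hence "real (nat (\<lfloor>b\<rfloor> - \<lceil>a\<rceil> + 1)) = real_of_int (\<lfloor>b\<rfloor> - \<lceil>a\<rceil> + 1)" by simp
    also have "\<dots> \<le> b - a + 1" using of_int_floor_le[of b] le_of_int_ceiling[of a]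
      by (simp only: of_int_add of_int_diff of_int_1)
    finally show ?thesis .
  next
    case False thus ?thesis using assms by simp
  qed
  finally show ?thesis .
qed

lemma count_centres:
  fixes x :: "real^'n::finite" and k :: int and r :: real
  assumes r: "r > 0"
  shows "finite {j::'n\<Rightarrow>int. dist (centre (k,j)) x < r}"
    and "real (card {j::'n\<Rightarrow>int. dist (centre (k,j)) x < r})
           \<le> (2 * r / 2 powr (- real_of_int k) + 1) ^ CARD('n)"
proof -
  define l where "l = (2::real) powr (- real_of_int k)"
  have l: "l > 0" unfolding l_def by simp
  define S where "S i = {\<lceil>(x$i - r)/l - 1/2\<rceil>..\<lfloor>(x$i + r)/l - 1/2\<rfloor>}" for i
  have sub: "{j::'n\<Rightarrow>int. dist (centre (k,j)) x < r} \<subseteq> PiE UNIV S"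
  proof
    fix j :: "'n \<Rightarrow> int" assume "j \<in> {j::'n\<Rightarrow>int. dist (centre (k,j)) x < r}"
    hence d: "dist (centre (k,j)) x < r" by simp
    have "j i \<in> S i" for i
    proof -
      have "\<bar>(centre (k,j) - x)$i\<bar> \<le> norm (centre (k,j) - x)" by (rule component_le_norm_cart)
      hence "\<bar>(real_of_int (j i) + 1/2) * l - x$i\<bar> < r"
        using d by (simp add: centre_def side_len_def l_def dist_norm)
      hence a: "(x$i - r)/l - 1/2 < j i" and b: "j i < (x$i + r)/l - 1/2"
        using l by (auto simp: field_simps abs_less_iff)
      show ?thesis unfolding S_def using a b
        by (simp add: ceiling_le_iff le_floor_iff less_imp_le)
    qed
    thus "j \<in> PiE UNIV S" by auto
  qed
  have fin: "finite (PiE UNIV S)" by (intro finite_PiE) (auto simp: S_def)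
  show "finite {j::'n\<Rightarrow>int. dist (centre (k,j)) x < r}" using finite_subset[OF sub fin] .
  have "real (card {j::'n\<Rightarrow>int. dist (centre (k,j)) x < r}) \<le> real (card (PiE UNIV S))"
    using card_mono[OF fin sub] by simp
  also have "\<dots> = (\<Prod>i\<in>UNIV. real (card (S i)))" by (simp add: card_PiE)
  also have "\<dots> \<le> (\<Prod>i\<in>(UNIV::'n set). 2 * r / l + 1)"
  proof (rule prod_mono)
    fix i :: 'n
    have "(x$i - r)/l - 1/2 \<le> (x$i + r)/l - 1/2" using l r by (simp add: divide_right_mono)
    hence "real (card (S i)) \<le> ((x$i + r)/l - 1/2) - ((x$i - r)/l - 1/2) + 1"
      unfolding S_def by (rule card_int_interval_le)
    also have "\<dots> = 2 * r / l + 1" using l by (simp add: field_simps)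
    finally show "0 \<le> real (card (S i)) \<and> real (card (S i)) \<le> 2 * r / l + 1" by simp
  qed
  also have "\<dots> = (2 * r / l + 1) ^ CARD('n)" by simp
  finally show "real (card {j::'n\<Rightarrow>int. dist (centre (k,j)) x < r})
           \<le> (2 * r / 2 powr (- real_of_int k) + 1) ^ CARD('n)" by (simp add: l_def)
qed




lemma side_len_pos: "side_len Q > 0" by (simp add: side_len_def)

lemma psi_props:
  fixes \<psi> :: "real^'n::finite \<Rightarrow> real"
  assumes p: "\<psi> \<in> Psi s \<mu> A Q" and A: "A > 0"
  shows psi_supp: "\<And>x. \<psi> x \<noteq> 0 \<Longrightarrow> dist (centre Q) x < A * side_len Q"
    and psi_lip: "\<And>x y. \<bar>\<psi> x - \<psi> y\<bar> \<le> side_len Q powr (-1 - s/2) * dist x y"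
    and psi_bnd: "\<And>x. \<bar>\<psi> x\<bar> \<le> 2 * A * side_len Q powr (- s/2)"
    and psi_cont: "continuous_on UNIV \<psi>"
    and psi_int: "integral\<^sup>L \<mu> \<psi> = 0"
proof -
  obtain L where L: "L < side_len Q powr (-1 - s/2)" "L-lipschitz_on UNIV \<psi>"
    using p by (auto simp: Psi_def)
  obtain K where K: "K \<subseteq> ball (centre Q) (A * side_len Q)" "\<And>x. x \<notin> K \<Longrightarrow> \<psi> x = 0"
    using p by (auto simp: Psi_def)
  show "integral\<^sup>L \<mu> \<psi> = 0" using p by (auto simp: Psi_def)
  show supp: "dist (centre Q) x < A * side_len Q" if "\<psi> x \<noteq> 0" for x
    using K that by force
  show lip: "\<bar>\<psi> x - \<psi> y\<bar> \<le> side_len Q powr (-1 - s/2) * dist x y" for x y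
  proof -
    have "\<bar>\<psi> x - \<psi> y\<bar> \<le> L * dist x y"
      using lipschitz_onD[OF L(2), of x y] by (simp add: dist_real_def)
    also have "\<dots> \<le> side_len Q powr (-1 - s/2) * dist x y"
      using L(1) by (intro mult_right_mono) auto
    finally show ?thesis .
  qed
  show "continuous_on UNIV \<psi>" using L(2) by (rule lipschitz_on_continuous_on)
  show "\<bar>\<psi> x\<bar> \<le> 2 * A * side_len Q powr (- s/2)" for x
  proof (cases "\<psi> x = 0")
    case True thus ?thesis using A by simp
  next
    case False
    define l where "l = side_len Q"
    have l: "l > 0" by (simp add: l_def side_len_pos)
    obtain i :: 'n where True by simp
    define z where "z = centre Q + (A * l) *\<^sub>R axis i 1"
    have dz: "dist (centre Q) z = A * l" using A l by (simp add: z_def dist_norm)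
    hence "\<psi> z = 0" using supp[of z] l_def by fastforce
    have dx: "dist (centre Q) x < A * l" using supp[OF False] l_def by simp
    have "dist x z \<le> 2 * A * l" using dist_triangle[of x z "centre Q"] dz dx by (simp add: dist_commute)
    have "\<bar>\<psi> x\<bar> = \<bar>\<psi> x - \<psi> z\<bar>" using \<open>\<psi> z = 0\<close> by simp
    also have "\<dots> \<le> l powr (-1 - s/2) * dist x z" using lip l_def by simp
    also have "\<dots> \<le> l powr (-1 - s/2) * (2 * A * l)"
      using \<open>dist x z \<le> 2 * A * l\<close> by (intro mult_left_mono) auto
    also have "\<dots> = 2 * A * (l powr (-1 - s/2) * l powr 1)" using l by simp
    also have "\<dots> = 2 * A * l powr (- s/2)" using l by (simp only: powr_add[symmetric]) simp
    finally show ?thesis by (simp add: l_def)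
  qed
qed




lemma nice_space: "nice_measure s \<Lambda> \<mu> \<Longrightarrow> space \<mu> = UNIV"
  unfolding nice_measure_def using sets_eq_imp_space_eq[of \<mu> borel] by simp

lemma nice_sets: "nice_measure s \<Lambda> \<mu> \<Longrightarrow> B \<in> sets borel \<Longrightarrow> B \<in> sets \<mu>"
  unfolding nice_measure_def by simp

lemma nice_ball_fin:
  assumes "nice_measure s \<Lambda> \<mu>" "r > 0"
  shows "emeasure \<mu> (ball x r) < \<infinity>"
proof -
  have "emeasure \<mu> (ball x r) \<le> ennreal (\<Lambda> * r powr s)"
    using assms unfolding nice_measure_def by blast
  also have "\<dots> < \<infinity>" by simp
  finally show ?thesis .
qed

lemma nice_ball_meas:
  assumes "nice_measure s \<Lambda> \<mu>" "r > 0" and L: "\<Lambda> \<ge> 0"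
  shows "measure \<mu> (ball x r) \<le> \<Lambda> * r powr s"
proof -
  have e: "emeasure \<mu> (ball x r) \<le> ennreal (\<Lambda> * r powr s)"
    using assms unfolding nice_measure_def by blast
  have "emeasure \<mu> (ball x r) = ennreal (measure \<mu> (ball x r))"
    using nice_ball_fin[OF assms(1,2), of x] by (intro emeasure_eq_ennreal_measure) (simp add: less_top)
  with e have "ennreal (measure \<mu> (ball x r)) \<le> ennreal (\<Lambda> * r powr s)" by simp
  moreover have "\<Lambda> * r powr s \<ge> 0" using L by simp
  ultimately show ?thesis by simp
qed

lemma nice_meas_borel:
  assumes "nice_measure s \<Lambda> \<mu>" "continuous_on UNIV f"
  shows "(f::real^'n::finite \<Rightarrow> real) \<in> borel_measurable \<mu>"
proof -
  have "f \<in> borel_measurable borel" using assms(2) by (rule borel_measurable_continuous_onI)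
  moreover have "sets \<mu> = sets borel" using assms(1) unfolding nice_measure_def by simp
  ultimately show ?thesis using measurable_cong_sets by blast
qed

lemma nice_integrable:
  fixes f :: "real^'n::finite \<Rightarrow> real"
  assumes n: "nice_measure s \<Lambda> \<mu>" and c: "continuous_on UNIV f" and r: "r > 0"
    and b: "\<And>x. \<bar>f x\<bar> \<le> B" and sup: "\<And>x. f x \<noteq> 0 \<Longrightarrow> dist c0 x < r"
  shows "integrable \<mu> f"
proof (rule Bochner_Integration.integrable_bound)
  show "integrable \<mu> (\<lambda>x. B * indicator (ball c0 r) x)"
    using nice_ball_fin[OF n r] nice_sets[OF n] by (intro integrable_mult_right integrable_real_indicator) auto
  show "f \<in> borel_measurable \<mu>" using nice_meas_borel[OF n c] .
  have B: "B \<ge> 0" using b[of c0] by linarith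
  show "AE x in \<mu>. norm (f x) \<le> norm (B * indicator (ball c0 r) x)"
  proof (intro AE_I2)
    fix x show "norm (f x) \<le> norm (B * (indicator (ball c0 r) x :: real))"
      using b[of x] sup[of x] B by (cases "f x = 0") (auto simp: indicator_def)
  qed
qed

lemma pair_bound:
  fixes \<psi>1 \<psi>2 :: "real^'n::finite \<Rightarrow> real"
  assumes n: "nice_measure s \<Lambda> \<mu>" and A: "A > 0"
    and p1: "\<psi>1 \<in> Psi s \<mu> A Q" and p2: "\<psi>2 \<in> Psi s \<mu> A R"
    and le: "side_len R \<le> side_len Q"
  shows "\<bar>integral\<^sup>L \<mu> (\<lambda>x. \<psi>1 x * \<psi>2 x)\<bar>
     \<le> 2 * A\<^sup>2 * side_len Q powr (-1 - s/2) * side_len R powr (1 - s/2)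
          * measure \<mu> (ball (centre R) (A * side_len R))"
proof -
  define lQ lR cR where "lQ = side_len Q" "lR = side_len R" "cR = centre R"
  have lQ: "lQ > 0" and lR: "lR > 0" by (auto simp: lQ_lR_cR_def side_len_pos)
  note pr1 = psi_props[OF p1 A] and pr2 = psi_props[OF p2 A]
  have r: "A * lR > 0" using A lR by simp
  have i2: "integrable \<mu> \<psi>2"
    by (rule nice_integrable[OF n pr2(4) r pr2(3)]) (use pr2(1) lQ_lR_cR_def in auto)
  have c12: "continuous_on UNIV (\<lambda>x. (\<psi>1 x - \<psi>1 cR) * \<psi>2 x)"
    using pr1(4) pr2(4) by (intro continuous_intros) (auto simp: continuous_on_eq_continuous_within)
  have i12: "integrable \<mu> (\<lambda>x. \<psi>1 x * \<psi>2 x)"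
  proof (rule nice_integrable[OF n _ r])
    show "continuous_on UNIV (\<lambda>x. \<psi>1 x * \<psi>2 x)" using pr1(4) pr2(4) by (intro continuous_intros)
    show "\<bar>\<psi>1 x * \<psi>2 x\<bar> \<le> (2 * A * lQ powr (- s/2)) * (2 * A * lR powr (- s/2))" for x
      unfolding abs_mult lQ_lR_cR_def using pr1(3)[of x] pr2(3)[of x] by (intro mult_mono) auto
    show "dist (centre R) x < A * lR" if "\<psi>1 x * \<psi>2 x \<noteq> 0" for x
      using pr2(1)[of x] that lQ_lR_cR_def by auto
  qed
  have eq: "integral\<^sup>L \<mu> (\<lambda>x. \<psi>1 x * \<psi>2 x) = integral\<^sup>L \<mu> (\<lambda>x. (\<psi>1 x - \<psi>1 cR) * \<psi>2 x)"
  proof -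
    have "integral\<^sup>L \<mu> (\<lambda>x. (\<psi>1 x - \<psi>1 cR) * \<psi>2 x)
        = integral\<^sup>L \<mu> (\<lambda>x. \<psi>1 x * \<psi>2 x - \<psi>1 cR * \<psi>2 x)" by (simp add: algebra_simps)
    also have "\<dots> = integral\<^sup>L \<mu> (\<lambda>x. \<psi>1 x * \<psi>2 x) - integral\<^sup>L \<mu> (\<lambda>x. \<psi>1 cR * \<psi>2 x)"
      using i12 i2 by (intro Bochner_Integration.integral_diff) auto
    also have "integral\<^sup>L \<mu> (\<lambda>x. \<psi>1 cR * \<psi>2 x) = 0" using pr2(5) by simp
    finally show ?thesis by simp
  qed
  define K where "K = lQ powr (-1 - s/2) * (A * lR) * (2 * A * lR powr (- s/2))"
  have K: "K \<ge> 0" unfolding K_def using A lQ lR by simp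
  have iK: "integrable \<mu> (\<lambda>x. K * indicator (ball cR (A * lR)) x)"
    using nice_ball_fin[OF n r] nice_sets[OF n] by (intro integrable_mult_right integrable_real_indicator) auto
  have i3: "integrable \<mu> (\<lambda>x. (\<psi>1 x - \<psi>1 cR) * \<psi>2 x)"
    using i12 i2 by (simp add: algebra_simps)
  have "\<bar>integral\<^sup>L \<mu> (\<lambda>x. (\<psi>1 x - \<psi>1 cR) * \<psi>2 x)\<bar>
      \<le> integral\<^sup>L \<mu> (\<lambda>x. K * indicator (ball cR (A * lR)) x)"
  proof (rule integral_abs_bound_integral[OF i3 iK])
    fix x
    show "\<bar>(\<psi>1 x - \<psi>1 cR) * \<psi>2 x\<bar> \<le> K * indicator (ball cR (A * lR)) x"
    proof (cases "\<psi>2 x = 0")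
      case True thus ?thesis using K by (simp add: indicator_def)
    next
      case False
      have d: "dist cR x < A * lR" using pr2(1)[OF False] lQ_lR_cR_def by simp
      have "\<bar>\<psi>1 x - \<psi>1 cR\<bar> \<le> lQ powr (-1 - s/2) * dist x cR" using pr1(2) lQ_lR_cR_def by simp
      also have "\<dots> \<le> lQ powr (-1 - s/2) * (A * lR)" using d by (intro mult_left_mono) (auto simp: dist_commute)
      finally have a: "\<bar>\<psi>1 x - \<psi>1 cR\<bar> \<le> lQ powr (-1 - s/2) * (A * lR)" .
      have b: "\<bar>\<psi>2 x\<bar> \<le> 2 * A * lR powr (- s/2)" using pr2(3) lQ_lR_cR_def by simp
      have "\<bar>(\<psi>1 x - \<psi>1 cR) * \<psi>2 x\<bar> \<le> K" unfolding abs_mult K_def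
        using A lQ lR by (intro mult_mono a b) auto
      thus ?thesis using d by simp
    qed
  qed
  also have "\<dots> = K * measure \<mu> (ball cR (A * lR))"
    using nice_space[OF n] by simp
  also have "K = 2 * A\<^sup>2 * lQ powr (-1 - s/2) * lR powr (1 - s/2)"
  proof -
    have "lR powr 1 * lR powr (- s/2) = lR powr (1 - s/2)"
      by (simp only: powr_add[symmetric]) simp
    hence "lR * lR powr (- s/2) = lR powr (1 - s/2)" using lR by simp
    hence "K = 2 * A\<^sup>2 * lQ powr (-1 - s/2) * (lR * lR powr (- s/2))"
      unfolding K_def by (simp add: power2_eq_square algebra_simps)
    thus ?thesis using \<open>lR * lR powr (- s/2) = lR powr (1 - s/2)\<close> by simp
  qed
  finally show ?thesis unfolding eq lQ_lR_cR_def .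
qed




lemma geom_nat_sum:
  fixes N :: "nat set" assumes "finite N"
  shows "(\<Sum>n\<in>N. (1/2::real)^n) \<le> 2"
proof -
  have "(\<Sum>n\<in>N. (1/2::real)^n) \<le> (\<Sum>n. (1/2::real)^n)"
    by (rule sum_le_suminf) (use assms in \<open>auto intro: summable_geometric\<close>)
  also have "\<dots> = 2" by (subst suminf_geometric) auto
  finally show ?thesis .
qed

lemma geom_int_sum:
  fixes S :: "int set" assumes fin: "finite S"
  shows "(\<Sum>k\<in>S. (2::real) powr (- \<bar>real_of_int (k - k0)\<bar>)) \<le> 4"
proof -
  define Sp where "Sp = {k\<in>S. k \<ge> k0}"
  define Sm where "Sm = {k\<in>S. k < k0}"
  have fp: "finite Sp" "finite Sm" using fin by (auto simp: Sp_def Sm_def)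
  have split: "S = Sp \<union> Sm" "Sp \<inter> Sm = {}" by (auto simp: Sp_def Sm_def)
  have e: "(2::real) powr (- \<bar>real_of_int (k - k0)\<bar>) = (1/2)^(nat \<bar>k - k0\<bar>)" for k
  proof -
    have h: "\<bar>real_of_int (k - k0)\<bar> = real (nat \<bar>k - k0\<bar>)" by simp
    have "(2::real) powr (- \<bar>real_of_int (k - k0)\<bar>) = inverse (2 powr real (nat \<bar>k - k0\<bar>))"
      unfolding h by (simp add: powr_minus)
    also have "\<dots> = (1/2)^(nat \<bar>k - k0\<bar>)"
      by (simp only: powr_realpow[of 2] power_one_over) (simp add: divide_inverse)
    finally show ?thesis .
  qed
  have ip: "inj_on (\<lambda>k. nat \<bar>k - k0\<bar>) Sp" by (auto simp: Sp_def inj_on_def)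
  have im: "inj_on (\<lambda>k. nat \<bar>k - k0\<bar>) Sm" by (auto simp: Sm_def inj_on_def)
  have "(\<Sum>k\<in>Sp. (2::real) powr (- \<bar>real_of_int (k - k0)\<bar>)) = (\<Sum>n\<in>(\<lambda>k. nat \<bar>k - k0\<bar>)`Sp. (1/2)^n)"
    unfolding e by (simp add: sum.reindex[OF ip])
  also have "\<dots> \<le> 2" by (rule geom_nat_sum) (use fp in auto)
  finally have p: "(\<Sum>k\<in>Sp. (2::real) powr (- \<bar>real_of_int (k - k0)\<bar>)) \<le> 2" .
  have "(\<Sum>k\<in>Sm. (2::real) powr (- \<bar>real_of_int (k - k0)\<bar>)) = (\<Sum>n\<in>(\<lambda>k. nat \<bar>k - k0\<bar>)`Sm. (1/2)^n)"
    unfolding e by (simp add: sum.reindex[OF im])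
  also have "\<dots> \<le> 2" by (rule geom_nat_sum) (use fp in auto)
  finally have m: "(\<Sum>k\<in>Sm. (2::real) powr (- \<bar>real_of_int (k - k0)\<bar>)) \<le> 2" .
  have "(\<Sum>k\<in>S. (2::real) powr (- \<bar>real_of_int (k - k0)\<bar>))
      = (\<Sum>k\<in>Sp. (2::real) powr (- \<bar>real_of_int (k - k0)\<bar>)) + (\<Sum>k\<in>Sm. (2::real) powr (- \<bar>real_of_int (k - k0)\<bar>))"
    by (subst split(1), rule sum.union_disjoint) (use fp split in auto)
  with p m show ?thesis by simp
qed

lemma overlap_sum:
  fixes S :: "'n::finite dyadic_index set"
  assumes n: "nice_measure s \<Lambda> \<mu>" and fin: "finite S" and lev: "\<And>R. R \<in> S \<Longrightarrow> fst R = k"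
    and r: "r > 0" and \<rho>: "\<rho> > 0"
    and sub: "\<And>R. R \<in> S \<Longrightarrow> ball (centre R) r \<subseteq> ball c \<rho>"
  shows "(\<Sum>R\<in>S. measure \<mu> (ball (centre R) r))
          \<le> (2 * r / 2 powr (- real_of_int k) + 1) ^ CARD('n) * measure \<mu> (ball c \<rho>)"
proof -
  define N where "N = (2 * r / 2 powr (- real_of_int k) + 1) ^ CARD('n)"
  have N: "N \<ge> 0" unfolding N_def using r by simp
  have sp: "space \<mu> = UNIV" by (rule nice_space[OF n])
  have ii: "integrable \<mu> (indicator (ball c' r') :: _ \<Rightarrow> real)" if "r' > 0" for c' r'
    using nice_ball_fin[OF n that] nice_sets[OF n] by (intro integrable_real_indicator) auto
  have "(\<Sum>R\<in>S. measure \<mu> (ball (centre R) r)) = (\<Sum>R\<in>S. integral\<^sup>L \<mu> (indicator (ball (centre R) r)))"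
    using sp by simp
  also have "\<dots> = integral\<^sup>L \<mu> (\<lambda>x. \<Sum>R\<in>S. indicator (ball (centre R) r) x)"
    by (rule Bochner_Integration.integral_sum[symmetric]) (use ii r in auto)
  also have "\<dots> \<le> integral\<^sup>L \<mu> (\<lambda>x. N * indicator (ball c \<rho>) x)"
  proof (rule integral_mono)
    show "integrable \<mu> (\<lambda>x. \<Sum>R\<in>S. indicator (ball (centre R) r) x :: real)"
      using ii r by auto
    show "integrable \<mu> (\<lambda>x. N * indicator (ball c \<rho>) x :: real)"
      using ii \<rho> by auto
    fix x
    show "(\<Sum>R\<in>S. indicator (ball (centre R) r) x) \<le> N * (indicator (ball c \<rho>) x :: real)"
    proof (cases "x \<in> ball c \<rho>")
      case False
      hence "\<forall>R\<in>S. x \<notin> ball (centre R) r" using sub by blast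
      thus ?thesis using False by simp
    next
      case True
      have "(\<Sum>R\<in>S. indicator (ball (centre R) r) x :: real)
          = (\<Sum>R\<in>{R\<in>S. x \<in> ball (centre R) r}. 1)"
        by (subst sum.inter_filter[OF fin]) (auto simp: indicator_def intro!: sum.cong)
      also have "\<dots> = real (card {R\<in>S. x \<in> ball (centre R) r})" by simp
      also have "\<dots> \<le> real (card ((\<lambda>j. (k, j)) ` {j::'n\<Rightarrow>int. dist (centre (k,j)) x < r}))"
      proof -
        have "{R\<in>S. x \<in> ball (centre R) r} \<subseteq> (\<lambda>j. (k, j)) ` {j::'n\<Rightarrow>int. dist (centre (k,j)) x < r}"
        proof
          fix R assume "R \<in> {R\<in>S. x \<in> ball (centre R) r}"
          hence "R \<in> S" "dist (centre R) x < r" by auto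
          moreover have "R = (k, snd R)" using lev[OF \<open>R \<in> S\<close>] by (cases R) auto
          ultimately show "R \<in> (\<lambda>j. (k, j)) ` {j::'n\<Rightarrow>int. dist (centre (k,j)) x < r}"
            by (metis (mono_tags, lifting) image_eqI mem_Collect_eq)
        qed
        thus ?thesis using count_centres(1)[OF r, of k x] by (intro of_nat_mono card_mono) auto
      qed
      also have "\<dots> \<le> real (card {j::'n\<Rightarrow>int. dist (centre (k,j)) x < r})"
        by (intro of_nat_mono card_image_le count_centres(1)[OF r])
      also have "\<dots> \<le> N" unfolding N_def by (rule count_centres(2)[OF r])
      finally show ?thesis using True by simp
    qed
  qed
  also have "\<dots> = N * measure \<mu> (ball c \<rho>)" using sp by simp
  finally show ?thesis unfolding N_def .
qed




lemma pw_small: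
  fixes l t s :: real assumes "l > 0" "t > 0"
  shows "l powr (-1 - s/2) * (l*t) powr (1 - s/2) * t powr (s/2) = l powr (-s) * t"
proof -
  have "l powr (-1 - s/2) * (l*t) powr (1 - s/2) * t powr (s/2)
      = exp ((-1 - s/2) * ln l + (1 - s/2) * (ln l + ln t) + (s/2) * ln t)"
    using assms by (simp add: powr_def exp_add ln_mult)
  also have "(-1 - s/2) * ln l + (1 - s/2) * (ln l + ln t) + (s/2) * ln t = (-s) * ln l + ln t"
    by (simp add: algebra_simps)
  also have "exp ((-s) * ln l + ln t) = l powr (-s) * t"
    using assms by (subst exp_add) (simp add: powr_def)
  finally show ?thesis .
qed

lemma pw_large:
  fixes l u s :: real assumes "l > 0" "u > 0"
  shows "l powr (-1 - s/2) * (l*u) powr (1 - s/2) * (l*u) powr s * (l / (l*u)) powr (s/2) = u"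
proof -
  have "l powr (-1 - s/2) * (l*u) powr (1 - s/2) * (l*u) powr s * (l / (l*u)) powr (s/2)
      = exp ((-1 - s/2) * ln l) * exp ((1 - s/2) * ln (l*u)) * exp (s * ln (l*u)) * exp ((s/2) * ln (l/(l*u)))"
    using assms by (simp add: powr_def)
  also have "\<dots> = exp ((-1 - s/2) * ln l + (1 - s/2) * ln (l*u) + s * ln (l*u) + (s/2) * ln (l/(l*u)))"
    by (simp only: exp_add)
  also have "(-1 - s/2) * ln l + (1 - s/2) * ln (l*u) + s * ln (l*u) + (s/2) * ln (l/(l*u)) = ln u"
    using assms by (simp add: ln_mult ln_div algebra_simps)
  also have "exp (ln u) = u" using assms by simp
  finally show ?thesis .
qed

lemma pw_ball:
  fixes l a s :: real assumes "l > 0" "a > 0"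
  shows "(a * l) powr s = a powr s * l powr s"
  using assms by (simp add: powr_mult)






lemma const_bound:
  fixes A s \<Lambda> :: real assumes A: "A \<ge> 1" and s: "s > 0" and L: "\<Lambda> > 0"
  shows "4 * (2 * \<Lambda> * A\<^sup>2 * (3 * A) powr s * (4 * A + 1) ^ d)
     \<le> (8 * \<Lambda> * 3 powr s * 5 ^ d) * A powr (real d + 2 + 3 * s / 2)"
proof -
  have A0: "A > 0" using A by simp
  have "(4 * A + 1) ^ d \<le> (5 * A) ^ d" using A by (intro power_mono) auto
  hence "4 * (2 * \<Lambda> * A\<^sup>2 * (3 * A) powr s * (4 * A + 1) ^ d)
      \<le> 4 * (2 * \<Lambda> * A\<^sup>2 * (3 * A) powr s * (5 * A) ^ d)"
    using L A0 by (intro mult_left_mono) auto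
  also have "\<dots> = (8 * \<Lambda> * 3 powr s * 5 ^ d) * (A powr 2 * A powr s * A powr real d)"
    using A0 by (simp add: powr_mult powr_realpow power_mult_distrib algebra_simps)
  also have "A powr 2 * A powr s * A powr real d = A powr (real d + 2 + s)"
    by (simp add: powr_add[symmetric] algebra_simps)
  also have "A powr (real d + 2 + s) \<le> A powr (real d + 2 + 3 * s / 2)"
    using A s by (intro powr_mono) auto
  finally show ?thesis using L by (simp add: mult_left_mono)
qed



definition gram :: "(real^'n::finite) measure \<Rightarrow> ('n dyadic_index \<Rightarrow> real^'n \<Rightarrow> real)
   \<Rightarrow> 'n dyadic_index \<Rightarrow> 'n dyadic_index \<Rightarrow> real" where
  "gram \<mu> \<psi> Q R = integral\<^sup>L \<mu> (\<lambda>x. \<psi> Q x * \<psi> R x)"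

lemma gram_sym: "gram \<mu> \<psi> Q R = gram \<mu> \<psi> R Q"
  unfolding gram_def by (simp add: mult.commute)

lemma side_len_level:
  "side_len R = side_len Q * 2 powr (- real_of_int (fst R - fst Q))"
  unfolding side_len_def by (simp add: powr_add[symmetric])

context
  fixes s \<Lambda> A :: real and \<mu> :: "(real^'n::finite) measure"
    and \<psi> :: "'n dyadic_index \<Rightarrow> real^'n \<Rightarrow> real"
  assumes n: "nice_measure s \<Lambda> \<mu>" and L: "\<Lambda> > 0" and A: "A \<ge> 1" and s: "s > 0"
    and ps: "\<And>Q. \<psi> Q \<in> Psi s \<mu> A Q"
begin

lemma gram_nz:
  assumes "gram \<mu> \<psi> Q R \<noteq> 0"
  shows "dist (centre Q) (centre R) < A * side_len Q + A * side_len R"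
proof -
  have "\<exists>x. \<psi> Q x * \<psi> R x \<noteq> 0"
  proof (rule ccontr)
    assume "\<not> ?thesis"
    hence "(\<lambda>x. \<psi> Q x * \<psi> R x) = (\<lambda>x. 0)" by auto
    hence "gram \<mu> \<psi> Q R = 0" unfolding gram_def by simp
    with assms show False by simp
  qed
  then obtain x where x: "\<psi> Q x \<noteq> 0" "\<psi> R x \<noteq> 0" by auto
  have A0: "A > 0" using A by simp
  have "dist (centre Q) x < A * side_len Q" by (rule psi_supp[OF ps A0 x(1)])
  moreover have "dist (centre R) x < A * side_len R" by (rule psi_supp[OF ps A0 x(2)])
  ultimately show ?thesis using dist_triangle[of "centre Q" "centre R" x] by (simp add: dist_commute)
qed

definition "Mc = 2 * \<Lambda> * A\<^sup>2 * (3 * A) powr s * (4 * A + 1) ^ CARD('n)"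

lemma Mc_le: "4 * Mc \<le> (8 * \<Lambda> * 3 powr s * 5 ^ CARD('n)) * A powr (real CARD('n) + 2 + 3 * s / 2)"
  unfolding Mc_def by (rule const_bound[OF A s L])

lemma sum_nz:
  assumes "finite S"
  shows "(\<Sum>R\<in>S. \<bar>gram \<mu> \<psi> Q R\<bar> * f R) = (\<Sum>R\<in>{R\<in>S. gram \<mu> \<psi> Q R \<noteq> 0}. \<bar>gram \<mu> \<psi> Q R\<bar> * f R)"
  by (subst sum.inter_filter[OF assms]) (auto intro!: sum.cong)

lemma level_small:
  assumes fin: "finite S" and lev: "\<And>R. R \<in> S \<Longrightarrow> fst R = k" and kQ: "fst Q \<le> k"
  shows "(\<Sum>R\<in>S. \<bar>gram \<mu> \<psi> Q R\<bar> * (side_len R / side_len Q) powr (s/2))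
           \<le> Mc * 2 powr (- \<bar>real_of_int (k - fst Q)\<bar>)"
proof -
  define lQ where "lQ = side_len Q"
  define t where "t = (2::real) powr (- real_of_int (k - fst Q))"
  have lQ: "lQ > 0" by (simp add: lQ_def side_len_pos)
  have "(2::real) powr (- real_of_int (k - fst Q)) \<le> 2 powr 0" using kQ by (intro powr_mono) auto
  hence t: "t > 0" "t \<le> 1" by (auto simp: t_def)
  have t': "t = 2 powr (- \<bar>real_of_int (k - fst Q)\<bar>)" using kQ by (simp add: t_def)
  have A0: "A > 0" using A by simp
  have slR: "side_len R = lQ * t" if "R \<in> S" for R
    using side_len_level[of R Q] lev[OF that] by (simp add: lQ_def t_def)
  have lk: "2 powr (- real_of_int k) = lQ * t"
    using side_len_level[of "(k, undefined)" Q] by (simp add: lQ_def t_def side_len_def)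
  define S' where "S' = {R\<in>S. gram \<mu> \<psi> Q R \<noteq> 0}"
  have fS': "finite S'" using fin by (simp add: S'_def)
  define m where "m R = measure \<mu> (ball (centre R) (A * (lQ * t)))" for R
  define c where "c = 2 * A\<^sup>2 * lQ powr (-s) * t"
  have c: "c \<ge> 0" unfolding c_def using t by simp
  have tm: "\<bar>gram \<mu> \<psi> Q R\<bar> * (side_len R / side_len Q) powr (s/2) \<le> c * m R" if R: "R \<in> S'" for R
  proof -
    have RS: "R \<in> S" using R by (simp add: S'_def)
    have "side_len R \<le> side_len Q" using slR[OF RS] t lQ by (simp add: lQ_def)
    from pair_bound[OF n A0 ps ps this]
    have "\<bar>gram \<mu> \<psi> Q R\<bar> \<le> 2 * A\<^sup>2 * lQ powr (-1 - s/2) * (lQ*t) powr (1 - s/2) * m R"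
      unfolding gram_def m_def using slR[OF RS] by (simp add: lQ_def)
    hence "\<bar>gram \<mu> \<psi> Q R\<bar> * (side_len R / side_len Q) powr (s/2)
        \<le> 2 * A\<^sup>2 * lQ powr (-1 - s/2) * (lQ*t) powr (1 - s/2) * m R * t powr (s/2)"
    proof -
      have "side_len R / side_len Q = t" using slR[OF RS] lQ by (simp add: lQ_def)
      thus ?thesis using \<open>\<bar>gram \<mu> \<psi> Q R\<bar> \<le> _\<close> by (simp add: mult_right_mono)
    qed
    also have "\<dots> = 2 * A\<^sup>2 * (lQ powr (-1 - s/2) * (lQ*t) powr (1 - s/2) * t powr (s/2)) * m R"
      by (simp add: algebra_simps)
    also have "\<dots> = c * m R" unfolding pw_small[OF lQ t(1)] c_def by (simp add: algebra_simps)
    finally show ?thesis .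
  qed
  have e1: "(\<Sum>R\<in>S. \<bar>gram \<mu> \<psi> Q R\<bar> * (side_len R / side_len Q) powr (s/2))
      = (\<Sum>R\<in>S'. \<bar>gram \<mu> \<psi> Q R\<bar> * (side_len R / side_len Q) powr (s/2))"
    unfolding S'_def by (rule sum_nz[OF fin])
  have e2: "\<dots> \<le> c * (\<Sum>R\<in>S'. m R)"
    using sum_mono[of S' _ "\<lambda>R. c * m R", OF tm] by (simp add: sum_distrib_left)
  have e3: "(\<Sum>R\<in>S'. m R) \<le> (2 * (A * (lQ * t)) / 2 powr (- real_of_int k) + 1) ^ CARD('n)
                              * measure \<mu> (ball (centre Q) (3 * A * lQ))"
    unfolding m_def
  proof (rule overlap_sum[OF n fS'])
    show "fst R = k" if "R \<in> S'" for R using that lev by (simp add: S'_def)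
    show "A * (lQ * t) > 0" using A0 lQ t by simp
    show "3 * A * lQ > 0" using A0 lQ by simp
    fix R assume R: "R \<in> S'"
    have RS: "R \<in> S" using R by (simp add: S'_def)
    have d: "dist (centre Q) (centre R) < A * lQ + A * (lQ * t)"
      using gram_nz[of Q R] R slR[OF RS] by (simp add: S'_def lQ_def)
    have "A * (lQ * t) \<le> A * lQ" using A0 lQ t by simp
    show "ball (centre R) (A * (lQ * t)) \<subseteq> ball (centre Q) (3 * A * lQ)"
    proof
      fix y assume "y \<in> ball (centre R) (A * (lQ * t))"
      hence "dist (centre R) y < A * (lQ * t)" by simp
      hence "dist (centre Q) y < 3 * A * lQ"
        using d \<open>A * (lQ * t) \<le> A * lQ\<close> dist_triangle[of "centre Q" y "centre R"] by linarith
      thus "y \<in> ball (centre Q) (3 * A * lQ)" by simp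
    qed
  qed
  have e3': "2 * (A * (lQ * t)) / 2 powr (- real_of_int k) + 1 = 2 * A + 1"
    unfolding lk using lQ t by simp
  have e4: "measure \<mu> (ball (centre Q) (3 * A * lQ)) \<le> \<Lambda> * (3 * A * lQ) powr s"
    by (rule nice_ball_meas[OF n]) (use A0 lQ L in auto)
  have N0: "(2 * A + 1) ^ CARD('n) \<ge> 0" using A0 by simp
  have "(\<Sum>R\<in>S. \<bar>gram \<mu> \<psi> Q R\<bar> * (side_len R / side_len Q) powr (s/2))
      \<le> c * ((2 * A + 1) ^ CARD('n) * (\<Lambda> * (3 * A * lQ) powr s))"
  proof -
    have "(\<Sum>R\<in>S'. m R) \<le> (2 * A + 1) ^ CARD('n) * (\<Lambda> * (3 * A * lQ) powr s)"
      using e3 unfolding e3' using mult_left_mono[OF e4 N0] by linarith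
    hence "c * (\<Sum>R\<in>S'. m R) \<le> c * ((2 * A + 1) ^ CARD('n) * (\<Lambda> * (3 * A * lQ) powr s))"
      using c by (rule mult_left_mono)
    thus ?thesis using e1 e2 by linarith
  qed
  also have "\<dots> = 2 * \<Lambda> * A\<^sup>2 * (3 * A) powr s * (2 * A + 1) ^ CARD('n) * t * (lQ powr (-s) * lQ powr s)"
    unfolding c_def using pw_ball[OF lQ, of "3 * A" s] A0 by (simp add: algebra_simps)
  also have "lQ powr (-s) * lQ powr s = 1" using lQ by (simp add: powr_add[symmetric])
  also have "2 * \<Lambda> * A\<^sup>2 * (3 * A) powr s * (2 * A + 1) ^ CARD('n) * t * 1 \<le> Mc * t"
  proof -
    have "(2 * A + 1) ^ CARD('n) \<le> (4 * A + 1) ^ CARD('n)" using A0 by (intro power_mono) auto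
    moreover have "2 * \<Lambda> * A\<^sup>2 * (3 * A) powr s \<ge> 0" using L by simp
    ultimately have "2 * \<Lambda> * A\<^sup>2 * (3 * A) powr s * (2 * A + 1) ^ CARD('n)
        \<le> 2 * \<Lambda> * A\<^sup>2 * (3 * A) powr s * (4 * A + 1) ^ CARD('n)" by (rule mult_left_mono)
    thus ?thesis unfolding Mc_def using t by (simp add: mult_right_mono)
  qed
  finally show ?thesis unfolding t' .
qed


lemma level_large:
  assumes fin: "finite S" and lev: "\<And>R. R \<in> S \<Longrightarrow> fst R = k" and kQ: "k < fst Q"
  shows "(\<Sum>R\<in>S. \<bar>gram \<mu> \<psi> Q R\<bar> * (side_len R / side_len Q) powr (s/2))
           \<le> Mc * 2 powr (- \<bar>real_of_int (k - fst Q)\<bar>)"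
proof -
  define lk where "lk = (2::real) powr (- real_of_int k)"
  define u where "u = (2::real) powr (- real_of_int (fst Q - k))"
  have lk: "lk > 0" by (simp add: lk_def)
  have "(2::real) powr (- real_of_int (fst Q - k)) \<le> 2 powr 0" using kQ by (intro powr_mono) auto
  hence u: "u > 0" "u \<le> 1" by (auto simp: u_def)
  have u': "u = 2 powr (- \<bar>real_of_int (k - fst Q)\<bar>)" using kQ by (simp add: u_def)
  have A0: "A > 0" using A by simp
  have slR: "side_len R = lk" if "R \<in> S" for R
    using lev[OF that] by (simp add: lk_def side_len_def)
  have slQ: "side_len Q = lk * u"
    using side_len_level[of Q "(k, undefined)"] by (simp add: lk_def u_def side_len_def)
  define S' where "S' = {R\<in>S. gram \<mu> \<psi> Q R \<noteq> 0}"
  have fS': "finite S'" using fin by (simp add: S'_def)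
  define b where "b = 2 * \<Lambda> * A\<^sup>2 * A powr s * u"
  have tm: "\<bar>gram \<mu> \<psi> Q R\<bar> * (side_len R / side_len Q) powr (s/2) \<le> b" if R: "R \<in> S'" for R
  proof -
    have RS: "R \<in> S" using R by (simp add: S'_def)
    have "side_len Q \<le> side_len R" using slR[OF RS] slQ u lk by simp
    from pair_bound[OF n A0 ps ps this]
    have g: "\<bar>gram \<mu> \<psi> R Q\<bar> \<le> 2 * A\<^sup>2 * lk powr (-1 - s/2) * (lk*u) powr (1 - s/2)
              * measure \<mu> (ball (centre Q) (A * (lk * u)))"
      unfolding gram_def using slR[OF RS] slQ by simp
    have m: "measure \<mu> (ball (centre Q) (A * (lk * u))) \<le> \<Lambda> * (A * (lk * u)) powr s"
      by (rule nice_ball_meas[OF n]) (use A0 lk u L in auto)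
    have p0: "2 * A\<^sup>2 * lk powr (-1 - s/2) * (lk*u) powr (1 - s/2) \<ge> 0" by simp
    have "\<bar>gram \<mu> \<psi> Q R\<bar> \<le> 2 * A\<^sup>2 * lk powr (-1 - s/2) * (lk*u) powr (1 - s/2)
              * (\<Lambda> * (A * (lk * u)) powr s)"
      using g mult_left_mono[OF m p0] gram_sym[of \<mu> \<psi> Q R] by linarith
    hence "\<bar>gram \<mu> \<psi> Q R\<bar> * (side_len R / side_len Q) powr (s/2)
        \<le> 2 * A\<^sup>2 * lk powr (-1 - s/2) * (lk*u) powr (1 - s/2)
              * (\<Lambda> * (A * (lk * u)) powr s) * (lk / (lk * u)) powr (s/2)"
      using slR[OF RS] slQ by (simp add: mult_right_mono)
    also have "\<dots> = 2 * \<Lambda> * A\<^sup>2 * A powr s *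
        (lk powr (-1 - s/2) * (lk*u) powr (1 - s/2) * (lk*u) powr s * (lk / (lk*u)) powr (s/2))"
      using pw_ball[of "lk * u" A s] lk u A0 by (simp add: algebra_simps)
    also have "\<dots> = b" unfolding pw_large[OF lk u(1)] b_def ..
    finally show ?thesis .
  qed
  have cardS': "real (card S') \<le> (4 * A + 1) ^ CARD('n)"
  proof -
    have r: "2 * A * lk > 0" using A0 lk by simp
    have "S' \<subseteq> (\<lambda>j. (k, j)) ` {j::'n\<Rightarrow>int. dist (centre (k,j)) (centre Q) < 2 * A * lk}"
    proof
      fix R assume R: "R \<in> S'"
      hence RS: "R \<in> S" by (simp add: S'_def)
      have d: "dist (centre Q) (centre R) < A * (lk * u) + A * lk"
        using gram_nz[of Q R] R slR[OF RS] slQ by (simp add: S'_def)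
      have "A * (lk * u) \<le> A * lk" using A0 lk u by simp
      hence "dist (centre R) (centre Q) < 2 * A * lk" using d by (simp add: dist_commute)
      moreover have "R = (k, snd R)" using lev[OF RS] by (cases R) auto
      ultimately show "R \<in> (\<lambda>j. (k, j)) ` {j::'n\<Rightarrow>int. dist (centre (k,j)) (centre Q) < 2 * A * lk}"
        by (metis (mono_tags, lifting) image_eqI mem_Collect_eq)
    qed
    hence "real (card S') \<le> real (card ((\<lambda>j. (k, j)) ` {j::'n\<Rightarrow>int. dist (centre (k,j)) (centre Q) < 2 * A * lk}))"
      using count_centres(1)[OF r, of k "centre Q"] by (intro of_nat_mono card_mono) auto
    also have "\<dots> \<le> real (card {j::'n\<Rightarrow>int. dist (centre (k,j)) (centre Q) < 2 * A * lk})"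
      by (intro of_nat_mono card_image_le count_centres(1)[OF r])
    also have "\<dots> \<le> (2 * (2 * A * lk) / 2 powr (- real_of_int k) + 1) ^ CARD('n)"
      by (rule count_centres(2)[OF r])
    also have "2 * (2 * A * lk) / 2 powr (- real_of_int k) + 1 = 4 * A + 1"
      using lk by (simp add: lk_def[symmetric])
    finally show ?thesis .
  qed
  have "(\<Sum>R\<in>S. \<bar>gram \<mu> \<psi> Q R\<bar> * (side_len R / side_len Q) powr (s/2))
      = (\<Sum>R\<in>S'. \<bar>gram \<mu> \<psi> Q R\<bar> * (side_len R / side_len Q) powr (s/2))"
    unfolding S'_def by (rule sum_nz[OF fin])
  also have "\<dots> \<le> real (card S') * b"
    using sum_bounded_above[of S' _ b, OF tm] by simp
  also have "\<dots> \<le> (4 * A + 1) ^ CARD('n) * b"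
    using cardS' by (rule mult_right_mono) (use L u in \<open>simp add: b_def\<close>)
  also have "\<dots> \<le> Mc * u"
  proof -
    have "A powr s \<le> (3 * A) powr s" using A0 s by (intro powr_mono2) auto
    hence "2 * \<Lambda> * A\<^sup>2 * A powr s \<le> 2 * \<Lambda> * A\<^sup>2 * (3 * A) powr s"
      using L by (intro mult_left_mono) auto
    hence "(4 * A + 1) ^ CARD('n) * (2 * \<Lambda> * A\<^sup>2 * A powr s) * u
        \<le> (4 * A + 1) ^ CARD('n) * (2 * \<Lambda> * A\<^sup>2 * (3 * A) powr s) * u"
      using A0 u by (intro mult_right_mono[OF mult_left_mono]) auto
    thus ?thesis unfolding b_def Mc_def by (simp add: algebra_simps)
  qed
  finally show ?thesis unfolding u' .
qed

lemma row_bound: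
  assumes fin: "finite F"
  shows "(\<Sum>R\<in>F. \<bar>gram \<mu> \<psi> Q R\<bar> * (side_len R / side_len Q) powr (s/2)) \<le> 4 * Mc"
proof -
  define f where "f R = \<bar>gram \<mu> \<psi> Q R\<bar> * (side_len R / side_len Q) powr (s/2)" for R
  have "(\<Sum>R\<in>F. f R) = (\<Sum>k\<in>fst ` F. \<Sum>R\<in>{R. R \<in> F \<and> fst R = k}. f R)"
    by (rule sum.group[symmetric]) (use fin in auto)
  also have "\<dots> \<le> (\<Sum>k\<in>fst ` F. Mc * 2 powr (- \<bar>real_of_int (k - fst Q)\<bar>))"
  proof (rule sum_mono)
    fix k assume "k \<in> fst ` F"
    have fk: "finite {R. R \<in> F \<and> fst R = k}" using fin by simp
    show "(\<Sum>R\<in>{R. R \<in> F \<and> fst R = k}. f R) \<le> Mc * 2 powr (- \<bar>real_of_int (k - fst Q)\<bar>)"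
    proof (cases "fst Q \<le> k")
      case True thus ?thesis unfolding f_def by (intro level_small[OF fk]) auto
    next
      case False thus ?thesis unfolding f_def by (intro level_large[OF fk]) auto
    qed
  qed
  also have "\<dots> = Mc * (\<Sum>k\<in>fst ` F. 2 powr (- \<bar>real_of_int (k - fst Q)\<bar>))"
    by (simp add: sum_distrib_left)
  also have "\<dots> \<le> Mc * 4"
    using geom_int_sum[of "fst ` F" "fst Q"] fin L A
    by (intro mult_left_mono) (auto simp: Mc_def)
  finally show ?thesis unfolding f_def by simp
qed


lemma prod_integrable: "integrable \<mu> (\<lambda>x. \<psi> Q x * \<psi> R x)"
proof -
  have A0: "A > 0" using A by simp
  note pr1 = psi_props[OF ps[of Q] A0] and pr2 = psi_props[OF ps[of R] A0]
  have r: "A * side_len R > 0" using A0 side_len_pos[of R] by simp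
  show ?thesis
  proof (rule nice_integrable[OF n _ r])
    show "continuous_on UNIV (\<lambda>x. \<psi> Q x * \<psi> R x)" using pr1(4) pr2(4) by (intro continuous_intros)
    show "\<bar>\<psi> Q x * \<psi> R x\<bar> \<le> (2 * A * side_len Q powr (- s/2)) * (2 * A * side_len R powr (- s/2))" for x
      unfolding abs_mult using pr1(3)[of x] pr2(3)[of x] by (intro mult_mono) auto
    show "dist (centre R) x < A * side_len R" if "\<psi> Q x * \<psi> R x \<noteq> 0" for x
      using pr2(1)[of x] that by auto
  qed
qed

lemma amgm:
  fixes x y r :: real assumes "r > 0"
  shows "\<bar>x\<bar> * \<bar>y\<bar> \<le> (x\<^sup>2 * r + y\<^sup>2 * (1 / r)) / 2"
proof -
  have "0 \<le> (\<bar>x\<bar> * r - \<bar>y\<bar>)\<^sup>2" by simp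
  hence "2 * (\<bar>x\<bar> * \<bar>y\<bar>) * r \<le> x\<^sup>2 * r * r + y\<^sup>2"
    by (simp add: power2_eq_square algebra_simps)
  hence "2 * (\<bar>x\<bar> * \<bar>y\<bar>) * r \<le> (x\<^sup>2 * r + y\<^sup>2 * (1 / r)) * r"
    using assms by (simp add: algebra_simps)
  hence "2 * (\<bar>x\<bar> * \<bar>y\<bar>) \<le> x\<^sup>2 * r + y\<^sup>2 * (1 / r)"
    using assms by (simp only: mult_le_cancel_right_pos)
  thus ?thesis by simp
qed

lemma quad_bound:
  assumes fin: "finite F"
  shows "integrable \<mu> (\<lambda>x. (\<Sum>Q\<in>F. a Q * \<psi> Q x)\<^sup>2)"
    and "integral\<^sup>L \<mu> (\<lambda>x. (\<Sum>Q\<in>F. a Q * \<psi> Q x)\<^sup>2) \<le> 4 * Mc * (\<Sum>Q\<in>F. (a Q)\<^sup>2)"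
proof -
  have sq: "(\<Sum>Q\<in>F. a Q * \<psi> Q x)\<^sup>2 = (\<Sum>Q\<in>F. \<Sum>R\<in>F. a Q * a R * (\<psi> Q x * \<psi> R x))" for x
    by (simp add: power2_eq_square sum_product algebra_simps)
  have ii: "integrable \<mu> (\<lambda>x. a Q * a R * (\<psi> Q x * \<psi> R x))" for Q R
    using prod_integrable by simp
  show "integrable \<mu> (\<lambda>x. (\<Sum>Q\<in>F. a Q * \<psi> Q x)\<^sup>2)"
    unfolding sq by (intro Bochner_Integration.integrable_sum ii)
  define r where "r Q R = (side_len R / side_len Q) powr (s/2)" for Q R :: "'n dyadic_index"
  have rpos: "r Q R > 0" for Q R unfolding r_def using side_len_pos[of Q] side_len_pos[of R] by simp
  have rinv: "1 / r Q R = r R Q" for Q R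
  proof -
    have "r Q R * r R Q = ((side_len R / side_len Q) * (side_len Q / side_len R)) powr (s/2)"
      unfolding r_def using side_len_pos[of Q] side_len_pos[of R] by (subst powr_mult) auto
    also have "\<dots> = 1" using side_len_pos[of Q] side_len_pos[of R] by simp
    finally show ?thesis using rpos[of Q R] by (simp add: field_simps)
  qed
  have "integral\<^sup>L \<mu> (\<lambda>x. (\<Sum>Q\<in>F. a Q * \<psi> Q x)\<^sup>2)
      = (\<Sum>Q\<in>F. \<Sum>R\<in>F. a Q * a R * gram \<mu> \<psi> Q R)"
    unfolding sq gram_def using ii
    by (simp add: Bochner_Integration.integral_sum Bochner_Integration.integrable_sum)
  also have "\<dots> \<le> (\<Sum>Q\<in>F. \<Sum>R\<in>F. \<bar>a Q\<bar> * \<bar>a R\<bar> * \<bar>gram \<mu> \<psi> Q R\<bar>)"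
    by (intro sum_mono) (metis abs_ge_self abs_mult)
  also have "\<dots> \<le> (\<Sum>Q\<in>F. \<Sum>R\<in>F. ((a Q)\<^sup>2 * r Q R + (a R)\<^sup>2 * r R Q) / 2 * \<bar>gram \<mu> \<psi> Q R\<bar>)"
    by (intro sum_mono mult_right_mono) (use amgm[OF rpos] rinv in auto)
  also have "\<dots> = (\<Sum>Q\<in>F. \<Sum>R\<in>F. (a Q)\<^sup>2 * r Q R * \<bar>gram \<mu> \<psi> Q R\<bar>) / 2
                 + (\<Sum>Q\<in>F. \<Sum>R\<in>F. (a R)\<^sup>2 * r R Q * \<bar>gram \<mu> \<psi> Q R\<bar>) / 2"
    by (simp add: sum.distrib sum_divide_distrib add_divide_distrib distrib_right)
  also have "(\<Sum>Q\<in>F. \<Sum>R\<in>F. (a R)\<^sup>2 * r R Q * \<bar>gram \<mu> \<psi> Q R\<bar>)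
      = (\<Sum>Q\<in>F. \<Sum>R\<in>F. (a Q)\<^sup>2 * r Q R * \<bar>gram \<mu> \<psi> Q R\<bar>)"
    by (subst sum.swap) (intro sum.cong refl, metis gram_sym)
  also have "(\<Sum>Q\<in>F. \<Sum>R\<in>F. (a Q)\<^sup>2 * r Q R * \<bar>gram \<mu> \<psi> Q R\<bar>)
      = (\<Sum>Q\<in>F. (a Q)\<^sup>2 * (\<Sum>R\<in>F. \<bar>gram \<mu> \<psi> Q R\<bar> * r Q R))"
    by (simp add: sum_distrib_left algebra_simps)
  also have "\<dots> \<le> (\<Sum>Q\<in>F. (a Q)\<^sup>2 * (4 * Mc))"
    by (intro sum_mono mult_left_mono) (use row_bound[OF fin] in \<open>auto simp: r_def\<close>)
  finally show "integral\<^sup>L \<mu> (\<lambda>x. (\<Sum>Q\<in>F. a Q * \<psi> Q x)\<^sup>2) \<le> 4 * Mc * (\<Sum>Q\<in>F. (a Q)\<^sup>2)"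
    by (simp add: sum_distrib_left sum_distrib_right algebra_simps)
qed

end




theorem lemma5p1:
  fixes s \<Lambda> :: real
  assumes "CARD('n::finite) \<ge> 2"
    and "0 < s" and "s < real CARD('n)"
    and "\<Lambda> > 0"
  shows "\<exists>C5>0. \<forall>(\<mu> :: (real^'n) measure) A.
           nice_measure s \<Lambda> \<mu> \<and> A > 10 * sqrt (real CARD('n)) \<longrightarrow>
           riesz_family (C5 * A powr (real CARD('n) + 2 + 3 * s / 2)) \<mu> (Psi s \<mu> A)"
proof (intro exI[of _ "8 * \<Lambda> * 3 powr s * 5 ^ CARD('n)"] conjI allI impI)
  show "8 * \<Lambda> * 3 powr s * 5 ^ CARD('n) > 0" using assms(4) by simp
  fix \<mu> :: "(real^'n) measure" and A :: real
  assume h: "nice_measure s \<Lambda> \<mu> \<and> A > 10 * sqrt (real CARD('n))"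
  hence n: "nice_measure s \<Lambda> \<mu>" by simp
  have "sqrt (real CARD('n)) \<ge> 1" by simp
  hence A: "A \<ge> 1" using h by linarith
  define C where "C = 8 * \<Lambda> * 3 powr s * 5 ^ CARD('n) * A powr (real CARD('n) + 2 + 3 * s / 2)"
  show "riesz_family (8 * \<Lambda> * 3 powr s * 5 ^ CARD('n) * A powr (real CARD('n) + 2 + 3 * s / 2)) \<mu> (Psi s \<mu> A)"
    unfolding riesz_family_def riesz_system_def C_def[symmetric]
  proof (intro allI impI)
    fix \<psi> :: "'n dyadic_index \<Rightarrow> real^'n \<Rightarrow> real" and a :: "'n dyadic_index \<Rightarrow> real"
      and F :: "'n dyadic_index set"
    assume ps: "\<forall>Q. \<psi> Q \<in> Psi s \<mu> A Q" and sa: "(\<lambda>Q. (a Q)\<^sup>2) summable_on UNIV" and fin: "finite F"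
    have ps': "\<And>Q. \<psi> Q \<in> Psi s \<mu> A Q" using ps by (metis surj_pair)
    note qb = quad_bound[OF n assms(4) A assms(2) ps' fin, of a]
    have "(\<integral>\<^sup>+ x. ennreal ((\<Sum>Q\<in>F. a Q * \<psi> Q x)\<^sup>2) \<partial>\<mu>)
        = ennreal (integral\<^sup>L \<mu> (\<lambda>x. (\<Sum>Q\<in>F. a Q * \<psi> Q x)\<^sup>2))"
      by (rule nn_integral_eq_integral[OF qb(1)]) auto
    also have "\<dots> \<le> ennreal (C * (\<Sum>\<^sub>\<infinity>Q. (a Q)\<^sup>2))"
    proof (rule ennreal_leI)
      have c: "4 * Mc TYPE('n) s \<Lambda> A \<le> C"
        unfolding C_def by (rule Mc_le[OF n assms(4) A assms(2) ps'])
      have s1: "(\<Sum>Q\<in>F. (a Q)\<^sup>2) \<le> (\<Sum>\<^sub>\<infinity>Q. (a Q)\<^sup>2)"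
      proof -
        have "(\<Sum>Q\<in>F. (a Q)\<^sup>2) = (\<Sum>\<^sub>\<infinity>Q\<in>F. (a Q)\<^sup>2)" using fin by simp
        also have "\<dots> \<le> (\<Sum>\<^sub>\<infinity>Q. (a Q)\<^sup>2)"
          by (rule infsum_mono_neutral) (use fin sa in auto)
        finally show ?thesis .
      qed
      have s0: "(\<Sum>Q\<in>F. (a Q)\<^sup>2) \<ge> 0" by (simp add: sum_nonneg)
      have "integral\<^sup>L \<mu> (\<lambda>x. (\<Sum>Q\<in>F. a Q * \<psi> Q x)\<^sup>2) \<le> 4 * Mc TYPE('n) s \<Lambda> A * (\<Sum>Q\<in>F. (a Q)\<^sup>2)"
        by (rule qb(2))
      also have "\<dots> \<le> C * (\<Sum>Q\<in>F. (a Q)\<^sup>2)" using c s0 by (rule mult_right_mono)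
      also have "\<dots> \<le> C * (\<Sum>\<^sub>\<infinity>Q. (a Q)\<^sup>2)"
        using s1 by (rule mult_left_mono) (use assms(4) A in \<open>simp add: C_def\<close>)
      finally show "integral\<^sup>L \<mu> (\<lambda>x. (\<Sum>Q\<in>F. a Q * \<psi> Q x)\<^sup>2) \<le> C * (\<Sum>\<^sub>\<infinity>Q. (a Q)\<^sup>2)" .
    qed
    finally show "(\<integral>\<^sup>+ x. ennreal ((\<Sum>Q\<in>F. a Q * \<psi> Q x)\<^sup>2) \<partial>\<mu>) \<le> ennreal (C * (\<Sum>\<^sub>\<infinity>Q. (a Q)\<^sup>2))" .
  qed
qed


end
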